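(* Let $\lambda$ be a dominant weight and let $\Gamma=(\beta_i)_{i\in I}$ be a $\lambda$-chain indexed by a totally ordered set $I=\{\overline{1}<\cdots<\overline{t}<1<2<\cdots<q<\overline{t+1}<\cdots<\overline{n}\}$. Assume that $\{\beta_1,\ldots,\beta_q\}$ is exactly the set of positive roots (without repetition) of a rank $2$ root subsystem $\overline{\Phi}\subseteq\Phi$. For $i\in I$ let $l_i:=|\{j\in I: j<i,\ \beta_j=\beta_i\}|$. Let $i\in[q]$ and suppose $\beta_i^\vee=a\beta_1^\vee+b\beta_q^\vee$ with $a,b\in\mathbb{Z}_{\ge 0}$. Then $l_i=a\,l_1+b\,l_q$.
   Context: $\Phi$ is an irreducible (finite, crystallographic) root system of a complex simple Lie algebra, with positive roots $\Phi^+$, simple roots $\alpha_1,\dots,\alpha_r$ and $W$-invariant inner product $\langle\cdot,\cdot\rangle$ on the real span $V$ of $\Phi$; for $\alpha\in\Phi$, $\alpha^\vee:=2\alpha/\langle\alpha,\alpha\rangle$. A weight $\lambda$ is dominant if $\langle\lambda,\alpha^\vee\rangle\in\mathbb{Z}_{\ge0}$ for all $\alpha\in\Phi^+$. For $\alpha\in\Phi$, $k\in\mathbb{Z}$, let $H_{\alpha,k}=\{\mu\in V:\langle\mu,\alpha^\vee\rangle=k\}$. Alcoves are the connected components of $V\setminus\bigcup_{\alpha,k}H_{\alpha,k}$; the fundamental alcove is $A_\circ=\{\mu:0<\langle\mu,\alpha^\vee\rangle<1\ \forall\alpha\in\Phi^+\}$ and $A_{-\lambda}:=A_\circ-\lambda$.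 Two distinct alcoves $A,B$ are adjacent if they share a wall; we write $A\xrightarrow{\beta}B$ if the common wall lies in some $H_{\beta,k}$ and $\beta$ points from $A$ to $B$. A sequence of roots $(\beta_1,\dots,\beta_m)$ (here indexed by the ordered set $I$) is a $\lambda$-chain if $A_\circ=A_0\xrightarrow{-\beta_1}A_1\xrightarrow{-\beta_2}\cdots\xrightarrow{-\beta_m}A_m=A_{-\lambda}$ is an alcove path of minimal possible length between $A_\circ$ and $A_{-\lambda}$; its entries are positive roots. A rank $2$ root subsystem is a subset $\overline{\Phi}\subseteq\Phi$ which is itself a root system of rank $2$; its positive roots are $\overline{\Phi}^+=\overline{\Phi}\cap\Phi^+$. *)

theory Defs
  imports "HOL-Analysis.Analysis"
begin

definition coroot :: "'a::euclidean_space \<Rightarrow> 'a" where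
  "coroot \<alpha> = (2 / (\<alpha> \<bullet> \<alpha>)) *\<^sub>R \<alpha>"

definition reflect :: "'a::euclidean_space \<Rightarrow> 'a \<Rightarrow> 'a" where
  "reflect \<alpha> \<mu> = \<mu> - (\<mu> \<bullet> coroot \<alpha>) *\<^sub>R \<alpha>"

definition root_system :: "'a::euclidean_space set \<Rightarrow> bool" where
  "root_system \<Phi> \<longleftrightarrow> finite \<Phi> \<and> 0 \<notin> \<Phi> \<and>
     (\<forall>\<alpha>\<in>\<Phi>. \<forall>\<beta>\<in>\<Phi>. reflect \<alpha> \<beta> \<in> \<Phi>) \<and>
     (\<forall>\<alpha>\<in>\<Phi>. \<forall>\<beta>\<in>\<Phi>. \<beta> \<bullet> coroot \<alpha> \<in> \<int>) \<and>
     (\<forall>\<alpha>\<in>\<Phi>. \<forall>c::real. c *\<^sub>R \<alpha> \<in> \<Phi> \<longrightarrow> c = 1 \<or> c = -1)"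

definition rank :: "'a::euclidean_space set \<Rightarrow> nat" where
  "rank \<Phi> = dim (span \<Phi>)"

definition irreducible_rs :: "'a::euclidean_space set \<Rightarrow> bool" where
  "irreducible_rs \<Phi> \<longleftrightarrow> \<Phi> \<noteq> {} \<and>
     \<not> (\<exists>\<Phi>1 \<Phi>2. \<Phi> = \<Phi>1 \<union> \<Phi>2 \<and> \<Phi>1 \<noteq> {} \<and> \<Phi>2 \<noteq> {} \<and>
          (\<forall>\<alpha>\<in>\<Phi>1. \<forall>\<beta>\<in>\<Phi>2. \<alpha> \<bullet> \<beta> = 0))"

definition is_base :: "'a::euclidean_space set \<Rightarrow> 'a set \<Rightarrow> bool" where
  "is_base \<Phi> \<Delta> \<longleftrightarrow> \<Delta> \<subseteq> \<Phi> \<and> independent \<Delta> \<and>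
     (\<forall>\<beta>\<in>\<Phi>. \<exists>c::'a \<Rightarrow> int. \<beta> = (\<Sum>\<alpha>\<in>\<Delta>. of_int (c \<alpha>) *\<^sub>R \<alpha>) \<and>
        ((\<forall>\<alpha>\<in>\<Delta>. c \<alpha> \<ge> 0) \<or> (\<forall>\<alpha>\<in>\<Delta>. c \<alpha> \<le> 0)))"

definition pos_roots :: "'a::euclidean_space set \<Rightarrow> 'a set \<Rightarrow> 'a set" where
  "pos_roots \<Phi> \<Delta> = {\<beta>\<in>\<Phi>. \<exists>c::'a \<Rightarrow> int. \<beta> = (\<Sum>\<alpha>\<in>\<Delta>. of_int (c \<alpha>) *\<^sub>R \<alpha>) \<and>
        (\<forall>\<alpha>\<in>\<Delta>. c \<alpha> \<ge> 0)}"

definition dominant :: "'a::euclidean_space set \<Rightarrow> 'a set \<Rightarrow> 'a \<Rightarrow> bool" where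
  "dominant \<Phi> \<Delta> lam \<longleftrightarrow> (\<forall>\<alpha>\<in>pos_roots \<Phi> \<Delta>. lam \<bullet> coroot \<alpha> \<in> \<int> \<and> lam \<bullet> coroot \<alpha> \<ge> 0)"

definition hyp :: "'a::euclidean_space \<Rightarrow> int \<Rightarrow> 'a set" where
  "hyp \<alpha> k = {\<mu>. \<mu> \<bullet> coroot \<alpha> = of_int k}"

definition hyp_union :: "'a::euclidean_space set \<Rightarrow> 'a set" where
  "hyp_union \<Phi> = (\<Union>\<alpha>\<in>\<Phi>. \<Union>k. hyp \<alpha> k)"

definition is_alcove :: "'a::euclidean_space set \<Rightarrow> 'a set \<Rightarrow> bool" where
  "is_alcove \<Phi> A \<longleftrightarrow> (\<exists>x. x \<notin> hyp_union \<Phi> \<and>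
     A = connected_component_set (UNIV - hyp_union \<Phi>) x)"

definition fund_alcove :: "'a::euclidean_space set \<Rightarrow> 'a set \<Rightarrow> 'a set" where
  "fund_alcove \<Phi> \<Delta> = {\<mu>. \<forall>\<alpha>\<in>pos_roots \<Phi> \<Delta>. 0 < \<mu> \<bullet> coroot \<alpha> \<and> \<mu> \<bullet> coroot \<alpha> < 1}"

definition shifted_alcove :: "'a::euclidean_space set \<Rightarrow> 'a set \<Rightarrow> 'a \<Rightarrow> 'a set" where
  "shifted_alcove \<Phi> \<Delta> lam = (\<lambda>\<mu>. \<mu> - lam) ` fund_alcove \<Phi> \<Delta>"

definition share_wall :: "'a::euclidean_space set \<Rightarrow> 'a set \<Rightarrow> 'a set \<Rightarrow> 'a \<Rightarrow> int \<Rightarrow> bool" where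
  "share_wall \<Phi> A B \<beta> k \<longleftrightarrow> is_alcove \<Phi> A \<and> is_alcove \<Phi> B \<and> A \<noteq> B \<and> \<beta> \<in> \<Phi> \<and>
     aff_dim (closure A \<inter> closure B \<inter> hyp \<beta> k) = int DIM('a) - 1"

definition adjacent :: "'a::euclidean_space set \<Rightarrow> 'a set \<Rightarrow> 'a set \<Rightarrow> bool" where
  "adjacent \<Phi> A B \<longleftrightarrow> (\<exists>\<beta> k. share_wall \<Phi> A B \<beta> k)"

definition alcove_arrow :: "'a::euclidean_space set \<Rightarrow> 'a set \<Rightarrow> 'a \<Rightarrow> 'a set \<Rightarrow> bool" where
  "alcove_arrow \<Phi> A \<beta> B \<longleftrightarrow> (\<exists>k. share_wall \<Phi> A B \<beta> k \<and>
     (\<forall>x\<in>A. x \<bullet> coroot \<beta> < of_int k) \<and> (\<forall>y\<in>B. y \<bullet> coroot \<beta> > of_int k))"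

text \<open>An alcove path from A to B: a sequence of alcoves, consecutive ones adjacent.
  Its length is the number of steps (length of the list minus one).\<close>
definition alcove_path :: "'a::euclidean_space set \<Rightarrow> 'a set list \<Rightarrow> 'a set \<Rightarrow> 'a set \<Rightarrow> bool" where
  "alcove_path \<Phi> As A B \<longleftrightarrow> As \<noteq> [] \<and> hd As = A \<and> last As = B \<and>
     (\<forall>A'\<in>set As. is_alcove \<Phi> A') \<and>
     (\<forall>j. Suc j < length As \<longrightarrow> adjacent \<Phi> (As ! j) (As ! Suc j))"

text \<open>lam-chain (\<beta>_1,...,\<beta>_m): a minimal length alcove path
  A_0 = A_\<circ> --(-\<beta>_1)--> A_1 ... --(-\<beta>_m)--> A_m = A_{-lam}.\<close>
definition lambda_chain :: "'a::euclidean_space set \<Rightarrow> 'a set \<Rightarrow> 'a \<Rightarrow> 'a list \<Rightarrow> bool" where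
  "lambda_chain \<Phi> \<Delta> lam \<beta>s \<longleftrightarrow> (\<exists>As.
     length As = Suc (length \<beta>s) \<and>
     alcove_path \<Phi> As (fund_alcove \<Phi> \<Delta>) (shifted_alcove \<Phi> \<Delta> lam) \<and>
     (\<forall>j < length \<beta>s. alcove_arrow \<Phi> (As ! j) (- (\<beta>s ! j)) (As ! Suc j)) \<and>
     (\<forall>Bs. alcove_path \<Phi> Bs (fund_alcove \<Phi> \<Delta>) (shifted_alcove \<Phi> \<Delta> lam) \<longrightarrow>
           length As \<le> length Bs))"

end

theory Submission
  imports Defs
begin

definition lev :: "'a::euclidean_space \<Rightarrow> 'a set \<Rightarrow> int" where
  "lev \<gamma> A = (SOME m. \<forall>x\<in>A. of_int m < x \<bullet> coroot \<gamma> \<and> x \<bullet> coroot \<gamma> < of_int m + 1)"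

lemma alcove_nonempty:
  assumes "is_alcove \<Phi> A" shows "A \<noteq> {}"
proof -
  obtain x where x: "x \<notin> hyp_union \<Phi>" and Aeq: "A = connected_component_set (UNIV - hyp_union \<Phi>) x"
    using assms unfolding is_alcove_def by auto
  have "x \<in> A" unfolding Aeq using x by (simp add: connected_component_refl)
  then show ?thesis by auto
qed

lemma alcove_level_ex:
  assumes A: "is_alcove \<Phi> A" and g: "\<gamma> \<in> \<Phi>"
  shows "\<exists>m::int. \<forall>x\<in>A. of_int m < x \<bullet> coroot \<gamma> \<and> x \<bullet> coroot \<gamma> < of_int m + 1"
proof -
  obtain x0 where x0: "x0 \<notin> hyp_union \<Phi>" and Aeq: "A = connected_component_set (UNIV - hyp_union \<Phi>) x0"
    using A unfolding is_alcove_def by auto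
  have con: "connected A" using Aeq by simp
  have x0A: "x0 \<in> A" using Aeq x0 by auto
  have avoid: "\<And>x k. x \<in> A \<Longrightarrow> x \<bullet> coroot \<gamma> \<noteq> of_int k"
  proof -
    fix x k assume "x \<in> A"
    then have "x \<notin> hyp_union \<Phi>" using Aeq connected_component_subset by blast
    then show "x \<bullet> coroot \<gamma> \<noteq> of_int k" using g unfolding hyp_union_def hyp_def by auto
  qed
  define m where "m = \<lfloor>x0 \<bullet> coroot \<gamma>\<rfloor>"
  have "\<forall>x\<in>A. of_int m < x \<bullet> coroot \<gamma> \<and> x \<bullet> coroot \<gamma> < of_int m + 1"
  proof
    fix x assume xA: "x \<in> A"
    have m1: "of_int m \<le> x0 \<bullet> coroot \<gamma>" "x0 \<bullet> coroot \<gamma> < of_int m + 1" unfolding m_def by linarith+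
    have m2: "of_int m < x0 \<bullet> coroot \<gamma>" using m1 avoid[OF x0A, of m] by linarith
    show "of_int m < x \<bullet> coroot \<gamma> \<and> x \<bullet> coroot \<gamma> < of_int m + 1"
    proof (rule ccontr)
      assume "\<not> ?thesis"
      then consider "x \<bullet> coroot \<gamma> \<le> of_int m" | "of_int m + 1 \<le> x \<bullet> coroot \<gamma>" by linarith
      then show False
      proof cases
        case 1
        have "\<exists>z\<in>A. inner (coroot \<gamma>) z = of_int m"
          by (rule connected_ivt_hyperplane[OF con xA x0A]) (use 1 m2 in \<open>auto simp: inner_commute\<close>)
        then show False using avoid by (auto simp: inner_commute)
      next
        case 2
        have "\<exists>z\<in>A. inner (coroot \<gamma>) z = of_int (m+1)"
          by (rule connected_ivt_hyperplane[OF con x0A xA]) (use 2 m1 in \<open>auto simp: inner_commute\<close>)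
        then obtain z where "z \<in> A" "z \<bullet> coroot \<gamma> = of_int (m+1)" by (auto simp: inner_commute)
        then show False using avoid by blast
      qed
    qed
  qed
  then show ?thesis by blast
qed

lemma lev_prop:
  assumes "is_alcove \<Phi> A" "\<gamma> \<in> \<Phi>" "x \<in> A"
  shows "of_int (lev \<gamma> A) < x \<bullet> coroot \<gamma> \<and> x \<bullet> coroot \<gamma> < of_int (lev \<gamma> A) + 1"
  using someI_ex[OF alcove_level_ex[OF assms(1,2)]] assms(3) unfolding lev_def by blast

lemma lev_unique:
  assumes "A \<noteq> {}" and m: "\<forall>x\<in>A. of_int m < x \<bullet> coroot \<gamma> \<and> x \<bullet> coroot \<gamma> < of_int m + 1"
  shows "lev \<gamma> A = m"
proof -
  have ex: "\<exists>m. \<forall>x\<in>A. of_int m < x \<bullet> coroot \<gamma> \<and> x \<bullet> coroot \<gamma> < of_int m + 1" using m by blast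
  obtain x where x: "x \<in> A" using assms by auto
  have l: "of_int (lev \<gamma> A) < x \<bullet> coroot \<gamma> \<and> x \<bullet> coroot \<gamma> < of_int (lev \<gamma> A) + 1"
    using someI_ex[OF ex] x unfolding lev_def by blast
  have "of_int m < x \<bullet> coroot \<gamma> \<and> x \<bullet> coroot \<gamma> < of_int m + 1" using m x by blast
  with l have "of_int (lev \<gamma> A) < (of_int m + 1 :: real)" "of_int m < (of_int (lev \<gamma> A) + 1 :: real)" by linarith+
  then show ?thesis by linarith
qed

lemma closure_lev:
  assumes "is_alcove \<Phi> A" "\<gamma> \<in> \<Phi>" "z \<in> closure A"
  shows "of_int (lev \<gamma> A) \<le> z \<bullet> coroot \<gamma> \<and> z \<bullet> coroot \<gamma> \<le> of_int (lev \<gamma> A) + 1"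
proof -
  let ?T = "{z. of_int (lev \<gamma> A) \<le> z \<bullet> coroot \<gamma> \<and> z \<bullet> coroot \<gamma> \<le> of_int (lev \<gamma> A) + 1}"
  have "closed ?T"
    by (intro closed_Collect_conj closed_Collect_le continuous_intros)
  moreover have "A \<subseteq> ?T" using lev_prop[OF assms(1,2)] by fastforce
  ultimately have "closure A \<subseteq> ?T" by (rule closure_minimal[rotated])
  then show ?thesis using assms(3) by blast
qed

lemma alcove_eq:
  assumes A: "is_alcove \<Phi> A" and B: "is_alcove \<Phi> B"
    and eq: "\<And>\<gamma>. \<gamma> \<in> \<Phi> \<Longrightarrow> lev \<gamma> A = lev \<gamma> B"
  shows "A = B"
proof -
  obtain x where x: "x \<notin> hyp_union \<Phi>" and Aeq: "A = connected_component_set (UNIV - hyp_union \<Phi>) x"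
    using A unfolding is_alcove_def by auto
  obtain y where y: "y \<notin> hyp_union \<Phi>" and Beq: "B = connected_component_set (UNIV - hyp_union \<Phi>) y"
    using B unfolding is_alcove_def by auto
  have xA: "x \<in> A" using Aeq x by auto
  have yB: "y \<in> B" using Beq y by auto
  have seg: "closed_segment x y \<subseteq> UNIV - hyp_union \<Phi>"
  proof
    fix z assume z: "z \<in> closed_segment x y"
    then obtain u where u: "0 \<le> u" "u \<le> 1" and zdef: "z = (1 - u) *\<^sub>R x + u *\<^sub>R y"
      unfolding closed_segment_def by auto
    have "z \<notin> hyp \<gamma> k" if g: "\<gamma> \<in> \<Phi>" for \<gamma> k
    proof -
      have lx: "of_int (lev \<gamma> A) < x \<bullet> coroot \<gamma> \<and> x \<bullet> coroot \<gamma> < of_int (lev \<gamma> A) + 1"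
        using lev_prop[OF A g xA] .
      have ly: "of_int (lev \<gamma> A) < y \<bullet> coroot \<gamma> \<and> y \<bullet> coroot \<gamma> < of_int (lev \<gamma> A) + 1"
        using lev_prop[OF B g yB] eq[OF g] by simp
      have zc: "z \<bullet> coroot \<gamma> = (1 - u) * (x \<bullet> coroot \<gamma>) + u * (y \<bullet> coroot \<gamma>)"
        unfolding zdef by (simp add: inner_add_left)
      define p where "p = x \<bullet> coroot \<gamma>"
      define q where "q = y \<bullet> coroot \<gamma>"
      have "of_int (lev \<gamma> A) < z \<bullet> coroot \<gamma> \<and> z \<bullet> coroot \<gamma> < of_int (lev \<gamma> A) + 1"
      proof -
        have "(1-u) * p + u * q > (1-u) * of_int (lev \<gamma> A) + u * of_int (lev \<gamma> A)"
        proof (cases "u = 0")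
          case True then show ?thesis using lx p_def by simp
        next
          case False
          then have "u * q > u * of_int (lev \<gamma> A)" using u ly q_def by simp
          moreover have "(1-u) * p \<ge> (1-u) * of_int (lev \<gamma> A)" using u lx p_def
            by (intro mult_left_mono) auto
          ultimately show ?thesis by linarith
        qed
        moreover have "(1-u) * p + u * q < (1-u) * (of_int (lev \<gamma> A) + 1) + u * (of_int (lev \<gamma> A) + 1)"
        proof (cases "u = 0")
          case True then show ?thesis using lx p_def by simp
        next
          case False
          then have "u * q < u * (of_int (lev \<gamma> A) + 1)" using u ly q_def by simp
          moreover have "(1-u) * p \<le> (1-u) * (of_int (lev \<gamma> A) + 1)" using u lx p_def
            by (intro mult_left_mono) auto
          ultimately show ?thesis by linarith
        qed
        ultimately show ?thesis using zc p_def q_def by (simp add: algebra_simps)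
      qed
      then have "z \<bullet> coroot \<gamma> \<noteq> of_int k"
        by (metis floor_less_iff floor_of_int less_le not_less of_int_less_iff add.commute of_int_1 of_int_add zless_imp_add1_zle of_int_le_iff)
      then show ?thesis unfolding hyp_def by auto
    qed
    then show "z \<in> UNIV - hyp_union \<Phi>" unfolding hyp_union_def by auto
  qed
  have "closed_segment x y \<subseteq> connected_component_set (UNIV - hyp_union \<Phi>) x"
    by (rule connected_component_maximal) (use seg in auto)
  then have "y \<in> A" using Aeq by auto
  then show ?thesis using Aeq Beq connected_component_eq by blast
qed

lemma hyperplane_subset_parallel:
  fixes a c :: "'a::euclidean_space"
  assumes a: "a \<noteq> 0" and sub: "{x. a \<bullet> x = b} \<subseteq> {x. c \<bullet> x = d}"
  shows "\<exists>r. c = r *\<^sub>R a"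
proof -
  have aa: "a \<bullet> a \<noteq> 0" using a by simp
  define p where "p = (b / (a \<bullet> a)) *\<^sub>R a"
  have pa: "a \<bullet> p = b" unfolding p_def using aa by simp
  have orth: "c \<bullet> v = 0" if "a \<bullet> v = 0" for v
  proof -
    have "c \<bullet> p = d" using sub pa by auto
    moreover have "p + v \<in> {x. a \<bullet> x = b}" using pa that by (simp add: inner_add_right)
    then have "c \<bullet> (p + v) = d" using sub by blast
    ultimately show ?thesis by (simp add: inner_add_right)
  qed
  define v where "v = c - ((c \<bullet> a) / (a \<bullet> a)) *\<^sub>R a"
  have va: "a \<bullet> v = 0" unfolding v_def using aa by (simp add: inner_diff_right inner_commute)
  have vc: "c \<bullet> v = 0" using orth[OF va] .
  have "v \<bullet> v = c \<bullet> v - ((c \<bullet> a) / (a \<bullet> a)) * (a \<bullet> v)"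
    unfolding v_def by (simp add: inner_diff_left inner_commute)
  then have "v \<bullet> v = 0" using va vc by simp
  then have "v = 0" by simp
  then show ?thesis unfolding v_def by (intro exI[of _ "(c \<bullet> a) / (a \<bullet> a)"]) simp
qed

lemma coroot_nz: "\<alpha> \<noteq> 0 \<Longrightarrow> coroot \<alpha> \<noteq> 0"
  unfolding coroot_def by simp

lemma root_from_coroot: "\<alpha> \<noteq> 0 \<Longrightarrow> \<alpha> = ((\<alpha> \<bullet> \<alpha>) / 2) *\<^sub>R coroot \<alpha>"
  unfolding coroot_def by simp

lemma rs_facts:
  assumes "root_system \<Phi>"
  shows "0 \<notin> \<Phi>" "\<And>\<alpha> \<beta>. \<alpha> \<in> \<Phi> \<Longrightarrow> \<beta> \<in> \<Phi> \<Longrightarrow> reflect \<alpha> \<beta> \<in> \<Phi>"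
    "\<And>\<alpha> \<beta>. \<alpha> \<in> \<Phi> \<Longrightarrow> \<beta> \<in> \<Phi> \<Longrightarrow> \<beta> \<bullet> coroot \<alpha> \<in> \<int>"
    "\<And>\<alpha> c. \<alpha> \<in> \<Phi> \<Longrightarrow> c *\<^sub>R \<alpha> \<in> \<Phi> \<Longrightarrow> c = 1 \<or> c = -1"
  using assms unfolding root_system_def by auto

lemma hyp_affine: "affine (hyp \<beta> k)"
proof -
  have "hyp \<beta> k = {x. coroot \<beta> \<bullet> x = of_int k}" unfolding hyp_def by (auto simp: inner_commute)
  then show ?thesis using affine_hyperplane by simp
qed

lemma lev_wall:
  assumes rs: "root_system \<Phi>" and X: "is_alcove \<Phi> X" and Y: "is_alcove \<Phi> Y"
    and \<rho>: "\<rho> \<in> \<Phi>" and ad: "aff_dim (closure X \<inter> closure Y \<inter> hyp \<rho> k) = int DIM('a) - 1"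
    and \<delta>: "\<delta> \<in> \<Phi>" "\<delta> \<noteq> \<rho>" "\<delta> \<noteq> - \<rho>"
  shows "lev \<delta> X = lev \<delta> (Y :: 'a::euclidean_space set)"
proof (rule ccontr)
  assume ne: "lev \<delta> X \<noteq> lev \<delta> Y"
  define Z where "Z = closure X \<inter> closure Y \<inter> hyp \<rho> k"
  have dimeq: "int (DIM('a) - 1) = int DIM('a) - 1" using DIM_positive[where 'a='a] by (simp add: of_nat_diff)
  have adZ: "aff_dim Z = int (DIM('a) - 1)" using ad dimeq unfolding Z_def by simp
  from iffD1[OF aff_dim_eq_hyperplane adZ] obtain a b where a: "a \<noteq> 0" and hull: "affine hull Z = {x. a \<bullet> x = b}"
    by blast
  define n where "n = max (lev \<delta> X) (lev \<delta> Y)"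
  have Zsub: "Z \<subseteq> hyp \<delta> n"
  proof
    fix z assume z: "z \<in> Z"
    have 1: "of_int (lev \<delta> X) \<le> z \<bullet> coroot \<delta> \<and> z \<bullet> coroot \<delta> \<le> of_int (lev \<delta> X) + 1"
      using closure_lev[OF X \<delta>(1)] z unfolding Z_def by blast
    have 2: "of_int (lev \<delta> Y) \<le> z \<bullet> coroot \<delta> \<and> z \<bullet> coroot \<delta> \<le> of_int (lev \<delta> Y) + 1"
      using closure_lev[OF Y \<delta>(1)] z unfolding Z_def by blast
    have "real_of_int (lev \<delta> X) < of_int (lev \<delta> Y) \<or> real_of_int (lev \<delta> Y) < of_int (lev \<delta> X)"
      using ne by linarith
    then have "z \<bullet> coroot \<delta> = of_int n"
    proof
      assume l: "real_of_int (lev \<delta> X) < of_int (lev \<delta> Y)"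
      then have "lev \<delta> X + 1 \<le> lev \<delta> Y" by linarith
      then have "real_of_int (lev \<delta> X) + 1 \<le> of_int (lev \<delta> Y)" by linarith
      then show ?thesis using 1 2 l unfolding n_def by (simp add: max_def)
    next
      assume l: "real_of_int (lev \<delta> Y) < of_int (lev \<delta> X)"
      then have "lev \<delta> Y + 1 \<le> lev \<delta> X" by linarith
      then have "real_of_int (lev \<delta> Y) + 1 \<le> of_int (lev \<delta> X)" by linarith
      then show ?thesis using 1 2 l unfolding n_def by (simp add: max_def)
    qed
    then show "z \<in> hyp \<delta> n" unfolding hyp_def by simp
  qed
  have h1: "{x. a \<bullet> x = b} \<subseteq> {x. coroot \<delta> \<bullet> x = of_int n}"
    using hull_minimal[where S=affine, OF Zsub hyp_affine] hull unfolding hyp_def by (auto simp: inner_commute)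
  have h2: "{x. a \<bullet> x = b} \<subseteq> {x. coroot \<rho> \<bullet> x = of_int k}"
    using hull_minimal[where S=affine and s=Z and t="hyp \<rho> k", OF _ hyp_affine] hull unfolding hyp_def Z_def by (auto simp: inner_commute)
  obtain r1 where r1: "coroot \<rho> = r1 *\<^sub>R a" using hyperplane_subset_parallel[OF a h2] by blast
  obtain r2 where r2: "coroot \<delta> = r2 *\<^sub>R a" using hyperplane_subset_parallel[OF a h1] by blast
  have \<rho>0: "\<rho> \<noteq> 0" and \<delta>0: "\<delta> \<noteq> 0" using rs_facts(1)[OF rs] \<rho> \<delta> by auto
  have "r1 \<noteq> 0" using coroot_nz[OF \<rho>0] r1 by auto
  then have e2: "coroot \<delta> = (r2 / r1) *\<^sub>R coroot \<rho>" using r1 r2 by simp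
  define c where "c = (\<delta> \<bullet> \<delta>) / 2 * (r2 / r1) * (2 / (\<rho> \<bullet> \<rho>))"
  have "\<delta> = ((\<delta> \<bullet> \<delta>) / 2) *\<^sub>R coroot \<delta>" by (rule root_from_coroot[OF \<delta>0])
  also have "\<dots> = c *\<^sub>R \<rho>" by (simp add: e2 c_def coroot_def[of \<rho>])
  finally have dc: "\<delta> = c *\<^sub>R \<rho>" .
  then have "c = 1 \<or> c = -1" using rs_facts(4)[OF rs \<rho>] \<delta>(1) by metis
  then show False using dc \<delta> by auto
qed

definition raff :: "'a::euclidean_space \<Rightarrow> real \<Rightarrow> 'a \<Rightarrow> 'a" where
  "raff \<beta> m x = x - (x \<bullet> coroot \<beta> - m) *\<^sub>R \<beta>"

lemma coroot_self: "\<beta> \<noteq> 0 \<Longrightarrow> \<beta> \<bullet> coroot \<beta> = 2"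
  unfolding coroot_def by simp

lemma reflect_invol: "\<beta> \<noteq> 0 \<Longrightarrow> reflect \<beta> (reflect \<beta> x) = x"
  unfolding reflect_def by (simp add: inner_diff_left coroot_self)

lemma reflect_inner: "\<beta> \<noteq> 0 \<Longrightarrow> reflect \<beta> u \<bullet> reflect \<beta> v = u \<bullet> v"
  unfolding reflect_def coroot_def
  by (simp add: inner_diff_left inner_diff_right inner_commute field_simps)

lemma reflect_linear: "linear (reflect \<beta>)"
  unfolding reflect_def by (auto simp: linear_iff inner_add_left algebra_simps)

lemma reflect_scale: "reflect \<beta> (c *\<^sub>R v) = c *\<^sub>R reflect \<beta> v"
  unfolding reflect_def by (simp add: algebra_simps)

lemma coroot_reflect: "\<beta> \<noteq> 0 \<Longrightarrow> coroot (reflect \<beta> \<gamma>) = reflect \<beta> (coroot \<gamma>)"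
  unfolding coroot_def[of "reflect \<beta> \<gamma>"] coroot_def[of \<gamma>]
  by (simp add: reflect_inner reflect_scale)

lemma beta_reflect: "\<beta> \<noteq> 0 \<Longrightarrow> \<beta> \<bullet> reflect \<beta> w = - (\<beta> \<bullet> w)"
  unfolding reflect_def coroot_def by (simp add: inner_diff_right inner_commute)

lemma raff_eq: "raff \<beta> m x = reflect \<beta> x + m *\<^sub>R \<beta>"
  unfolding raff_def reflect_def by (simp add: algebra_simps)

lemma raff_invol: "\<beta> \<noteq> 0 \<Longrightarrow> raff \<beta> m (raff \<beta> m x) = x"
  unfolding raff_def by (simp add: inner_diff_left coroot_self algebra_simps)

lemma raff_coroot: "\<beta> \<noteq> 0 \<Longrightarrow>
   raff \<beta> m x \<bullet> coroot (reflect \<beta> \<gamma>) = x \<bullet> coroot \<gamma> - m * (\<beta> \<bullet> coroot \<gamma>)"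
  by (simp add: raff_eq coroot_reflect inner_add_left reflect_inner beta_reflect)

lemma raff_cont: "continuous_on S (raff \<beta> m)"
  unfolding raff_def by (intro continuous_intros)

lemma raff_inj: "\<beta> \<noteq> 0 \<Longrightarrow> inj (raff \<beta> m)"
  by (metis injI raff_invol)

lemma raff_hyp:
  assumes b: "\<beta> \<noteq> 0" and g: "\<gamma> \<noteq> 0" and n: "\<beta> \<bullet> coroot \<gamma> = of_int n"
  shows "raff \<beta> (of_int M) ` hyp \<gamma> k = hyp (reflect \<beta> \<gamma>) (k - M * n)"
proof
  show "raff \<beta> (of_int M) ` hyp \<gamma> k \<subseteq> hyp (reflect \<beta> \<gamma>) (k - M * n)"
    using b n by (auto simp: hyp_def raff_coroot)
next
  show "hyp (reflect \<beta> \<gamma>) (k - M * n) \<subseteq> raff \<beta> (of_int M) ` hyp \<gamma> k"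
  proof
    fix y assume y: "y \<in> hyp (reflect \<beta> \<gamma>) (k - M * n)"
    let ?x = "raff \<beta> (of_int M) y"
    have "?x \<bullet> coroot \<gamma> = ?x \<bullet> coroot (reflect \<beta> (reflect \<beta> \<gamma>))" using b by (simp add: reflect_invol)
    also have "\<dots> = y \<bullet> coroot (reflect \<beta> \<gamma>) - of_int M * (\<beta> \<bullet> coroot (reflect \<beta> \<gamma>))"
      using b by (rule raff_coroot)
    also have "\<beta> \<bullet> coroot (reflect \<beta> \<gamma>) = - of_int n" using b n by (simp add: coroot_reflect beta_reflect)
    finally have "?x \<bullet> coroot \<gamma> = of_int k" using y unfolding hyp_def by (simp add: algebra_simps)
    then have "?x \<in> hyp \<gamma> k" unfolding hyp_def by simp
    moreover have "y = raff \<beta> (of_int M) ?x" using b by (simp add: raff_invol)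
    ultimately show "y \<in> raff \<beta> (of_int M) ` hyp \<gamma> k" by blast
  qed
qed

lemma raff_S:
  assumes rs: "root_system \<Phi>" and b: "\<beta> \<in> \<Phi>" and x: "x \<notin> hyp_union \<Phi>"
  shows "raff \<beta> (of_int M) x \<notin> hyp_union \<Phi>"
proof
  assume "raff \<beta> (of_int M) x \<in> hyp_union \<Phi>"
  then obtain \<delta> k where d: "\<delta> \<in> \<Phi>" and h: "raff \<beta> (of_int M) x \<in> hyp \<delta> k" unfolding hyp_union_def by auto
  have b0: "\<beta> \<noteq> 0" using rs_facts(1)[OF rs] b by auto
  define \<gamma> where "\<gamma> = reflect \<beta> \<delta>"
  have g: "\<gamma> \<in> \<Phi>" unfolding \<gamma>_def using rs_facts(2)[OF rs b d] .
  have dg: "\<delta> = reflect \<beta> \<gamma>" unfolding \<gamma>_def using b0 by (simp add: reflect_invol)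
  obtain n where n: "\<beta> \<bullet> coroot \<gamma> = of_int n" using rs_facts(3)[OF rs g b] by (auto elim: Ints_cases)
  have "raff \<beta> (of_int M) x \<bullet> coroot \<delta> = x \<bullet> coroot \<gamma> - of_int M * (\<beta> \<bullet> coroot \<gamma>)"
    unfolding dg by (rule raff_coroot[OF b0])
  then have "x \<bullet> coroot \<gamma> = of_int (k + M * n)" using h n unfolding hyp_def by simp
  then have "x \<in> hyp_union \<Phi>" using g unfolding hyp_union_def hyp_def by blast
  then show False using x by blast
qed

lemma raff_component:
  assumes rs: "root_system \<Phi>" and b: "\<beta> \<in> \<Phi>"
  shows "raff \<beta> (of_int M) ` connected_component_set (UNIV - hyp_union \<Phi>) x =
         connected_component_set (UNIV - hyp_union \<Phi>) (raff \<beta> (of_int M) x)"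
proof -
  let ?S = "UNIV - hyp_union \<Phi>"
  let ?f = "raff \<beta> (of_int M)"
  have b0: "\<beta> \<noteq> 0" using rs_facts(1)[OF rs] b by auto
  have fS: "?f ` ?S \<subseteq> ?S" using raff_S[OF rs b] by auto
  have gen: "?f ` connected_component_set ?S y \<subseteq> connected_component_set ?S (?f y)" for y
  proof (cases "y \<in> ?S")
    case True
    show ?thesis
    proof (rule connected_component_maximal)
      show "?f y \<in> ?f ` connected_component_set ?S y" using True by (simp add: connected_component_refl)
      show "connected (?f ` connected_component_set ?S y)"
        by (rule connected_continuous_image[OF raff_cont]) simp
      show "?f ` connected_component_set ?S y \<subseteq> ?S" using fS connected_component_subset by blast
    qed
  next
    case False
    then have "connected_component_set ?S y = {}" by (metis connected_component_eq_empty)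
    then show ?thesis by (simp only: image_empty empty_subsetI)
  qed
  show ?thesis
  proof
    show "?f ` connected_component_set ?S x \<subseteq> connected_component_set ?S (?f x)" by (rule gen)
    have "?f ` connected_component_set ?S (?f x) \<subseteq> connected_component_set ?S x"
      using gen[of "?f x"] b0 by (simp add: raff_invol)
    then have "?f ` ?f ` connected_component_set ?S (?f x) \<subseteq> ?f ` connected_component_set ?S x" by blast
    then show "connected_component_set ?S (?f x) \<subseteq> ?f ` connected_component_set ?S x"
      using b0 by (simp add: image_image raff_invol)
  qed
qed

lemma raff_alcove:
  assumes rs: "root_system \<Phi>" and b: "\<beta> \<in> \<Phi>" and A: "is_alcove \<Phi> A"
  shows "is_alcove \<Phi> (raff \<beta> (of_int M) ` A)"
proof -
  obtain x where x: "x \<notin> hyp_union \<Phi>" and Aeq: "A = connected_component_set (UNIV - hyp_union \<Phi>) x"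
    using A unfolding is_alcove_def by auto
  show ?thesis unfolding is_alcove_def
    using raff_S[OF rs b x] raff_component[OF rs b] Aeq by blast
qed

lemma raff_closure:
  assumes b0: "\<beta> \<noteq> 0"
  shows "closure (raff \<beta> m ` A) = raff \<beta> m ` closure A"
proof
  show "raff \<beta> m ` closure A \<subseteq> closure (raff \<beta> m ` A)"
    by (rule image_closure_subset[OF raff_cont]) (auto intro: closure_subset[THEN subsetD])
  have "raff \<beta> m ` closure (raff \<beta> m ` A) \<subseteq> closure (raff \<beta> m ` raff \<beta> m ` A)"
    by (rule image_closure_subset[OF raff_cont]) (auto intro: closure_subset[THEN subsetD])
  also have "raff \<beta> m ` raff \<beta> m ` A = A" using b0 by (simp add: image_image raff_invol)
  finally have "raff \<beta> m ` raff \<beta> m ` closure (raff \<beta> m ` A) \<subseteq> raff \<beta> m ` closure A" by blast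
  then show "closure (raff \<beta> m ` A) \<subseteq> raff \<beta> m ` closure A"
    using b0 by (simp add: image_image raff_invol)
qed

lemma raff_aff_dim:
  assumes b0: "\<beta> \<noteq> 0"
  shows "aff_dim (raff \<beta> m ` Z) = aff_dim Z"
proof -
  have "raff \<beta> m ` Z = (+) (m *\<^sub>R \<beta>) ` (reflect \<beta> ` Z)"
    by (auto simp: raff_eq image_image add.commute)
  moreover have "inj (reflect \<beta>)" using b0 by (metis injI reflect_invol)
  ultimately show ?thesis
    by (simp add: aff_dim_translation_eq reflect_linear)
qed

lemma raff_share_wall:
  assumes rs: "root_system \<Phi>" and b: "\<beta> \<in> \<Phi>" and sw: "share_wall \<Phi> A B \<gamma> k"
  shows "\<exists>\<delta> k'. share_wall \<Phi> (raff \<beta> (of_int M) ` A) (raff \<beta> (of_int M) ` B) \<delta> k'"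
proof -
  let ?f = "raff \<beta> (of_int M)"
  have b0: "\<beta> \<noteq> 0" using rs_facts(1)[OF rs] b by auto
  have A: "is_alcove \<Phi> A" and B: "is_alcove \<Phi> B" and AB: "A \<noteq> B" and g: "\<gamma> \<in> \<Phi>"
    and ad: "aff_dim (closure A \<inter> closure B \<inter> hyp \<gamma> k) = int DIM('a) - 1"
    using sw unfolding share_wall_def by auto
  have g0: "\<gamma> \<noteq> 0" using rs_facts(1)[OF rs] g by auto
  obtain n where n: "\<beta> \<bullet> coroot \<gamma> = of_int n" using rs_facts(3)[OF rs g b] by (auto elim: Ints_cases)
  have inj: "inj ?f" using raff_inj[OF b0] .
  have "closure (?f ` A) \<inter> closure (?f ` B) \<inter> hyp (reflect \<beta> \<gamma>) (k - M * n)
        = ?f ` (closure A \<inter> closure B \<inter> hyp \<gamma> k)"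
    using raff_closure[OF b0] raff_hyp[OF b0 g0 n, of M k] inj by (simp add: image_Int)
  then have "aff_dim (closure (?f ` A) \<inter> closure (?f ` B) \<inter> hyp (reflect \<beta> \<gamma>) (k - M * n)) = int DIM('a) - 1"
    using ad raff_aff_dim[OF b0] by simp
  moreover have "?f ` A \<noteq> ?f ` B" using AB inj by (simp add: inj_image_eq_iff)
  moreover have "reflect \<beta> \<gamma> \<in> \<Phi>" using rs_facts(2)[OF rs b g] .
  ultimately show ?thesis unfolding share_wall_def
    using raff_alcove[OF rs b A] raff_alcove[OF rs b B] by blast
qed

lemma raff_adjacent:
  assumes rs: "root_system \<Phi>" and b: "\<beta> \<in> \<Phi>" and "adjacent \<Phi> A B"
  shows "adjacent \<Phi> (raff \<beta> (of_int M) ` A) (raff \<beta> (of_int M) ` B)"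
  using assms raff_share_wall unfolding adjacent_def by metis

lemma coroot_neg: "coroot (- \<beta>) = - coroot \<beta>"
  unfolding coroot_def by simp

lemma reflect_self: "\<beta> \<noteq> 0 \<Longrightarrow> reflect \<beta> \<beta> = - \<beta>"
  unfolding reflect_def by (simp add: coroot_self scaleR_2)

lemma neg_root: assumes rs: "root_system \<Phi>" and "\<beta> \<in> \<Phi>" shows "- \<beta> \<in> \<Phi>"
proof -
  have "\<beta> \<noteq> 0" using rs_facts(1)[OF rs] assms by auto
  then show ?thesis using rs_facts(2)[OF rs assms(2) assms(2)] by (simp add: reflect_self)
qed

lemma lev_neg:
  assumes X: "is_alcove \<Phi> X" and b: "\<beta> \<in> \<Phi>"
  shows "lev (- \<beta>) X = - lev \<beta> X - 1"
proof (rule lev_unique[OF alcove_nonempty[OF X]])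
  show "\<forall>x\<in>X. real_of_int (- lev \<beta> X - 1) < x \<bullet> coroot (- \<beta>) \<and> x \<bullet> coroot (- \<beta>) < real_of_int (- lev \<beta> X - 1) + 1"
  proof
    fix x assume "x \<in> X"
    then have "of_int (lev \<beta> X) < x \<bullet> coroot \<beta> \<and> x \<bullet> coroot \<beta> < of_int (lev \<beta> X) + 1"
      using lev_prop[OF X b] by blast
    then show "real_of_int (- lev \<beta> X - 1) < x \<bullet> coroot (- \<beta>) \<and> x \<bullet> coroot (- \<beta>) < real_of_int (- lev \<beta> X - 1) + 1"
      by (simp add: coroot_neg)
  qed
qed

lemma raff_neg: "raff (- \<beta>) m = raff \<beta> (- m)"
  unfolding raff_def by (auto simp: coroot_neg algebra_simps fun_eq_iff)

lemma aff_dim_hyp: "\<beta> \<noteq> 0 \<Longrightarrow> aff_dim (hyp \<beta> k) = int (DIM('a) - 1)" for \<beta> :: "'a::euclidean_space"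
proof -
  assume b: "\<beta> \<noteq> 0"
  have "affine hull (hyp \<beta> k) = {x. coroot \<beta> \<bullet> x = of_int k}"
    using hyp_affine[of \<beta> k] unfolding hyp_def by (auto simp: inner_commute)
  then show ?thesis using aff_dim_eq_hyperplane[of "hyp \<beta> k"] coroot_nz[OF b] by blast
qed

lemma arrow_lemma:
  assumes rs: "root_system \<Phi>" and arr: "alcove_arrow \<Phi> A (- \<beta>) B"
  shows "\<beta> \<in> \<Phi> \<and> lev \<beta> B = lev \<beta> A - 1 \<and> B = raff \<beta> (of_int (lev \<beta> A)) ` A"
proof -
  obtain k where sw: "share_wall \<Phi> A B (- \<beta>) k"
    and lA: "\<forall>x\<in>A. x \<bullet> coroot (- \<beta>) < of_int k" and lB: "\<forall>y\<in>B. y \<bullet> coroot (- \<beta>) > of_int k"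
    using arr unfolding alcove_arrow_def by blast
  have A: "is_alcove \<Phi> A" and B: "is_alcove \<Phi> B" and nb: "- \<beta> \<in> \<Phi>"
    and ad: "aff_dim (closure A \<inter> closure B \<inter> hyp (- \<beta>) k) = int DIM('a) - 1"
    using sw unfolding share_wall_def by auto
  have b: "\<beta> \<in> \<Phi>" using neg_root[OF rs nb] by simp
  have b0: "\<beta> \<noteq> 0" using rs_facts(1)[OF rs] b by auto
  define L where "L = - k"
  have lA': "\<forall>x\<in>A. x \<bullet> coroot \<beta> > of_int L" using lA unfolding L_def by (auto simp: coroot_neg)
  have lB': "\<forall>y\<in>B. y \<bullet> coroot \<beta> < of_int L" using lB unfolding L_def by (auto simp: coroot_neg)
  define Z where "Z = closure A \<inter> closure B \<inter> hyp (- \<beta>) k"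
  have "aff_dim Z \<noteq> -1" using ad DIM_positive[where 'a='a] unfolding Z_def by linarith
  then have "Z \<noteq> {}" using aff_dim_empty by blast
  then obtain z where z: "z \<in> Z" by blast
  have zL: "z \<bullet> coroot \<beta> = of_int L" using z unfolding Z_def hyp_def L_def by (auto simp: coroot_neg)
  obtain a where a: "a \<in> A" using alcove_nonempty[OF A] by blast
  obtain bb where bb: "bb \<in> B" using alcove_nonempty[OF B] by blast
  have levA: "lev \<beta> A = L"
  proof -
    have "of_int (lev \<beta> A) \<le> z \<bullet> coroot \<beta>" using closure_lev[OF A b] z unfolding Z_def by blast
    moreover have "a \<bullet> coroot \<beta> < of_int (lev \<beta> A) + 1" using lev_prop[OF A b a] by blast
    ultimately show ?thesis using zL lA' a by (smt (verit) of_int_less_iff of_int_add of_int_1 int_le_real_less)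
  qed
  have levB: "lev \<beta> B = L - 1"
  proof -
    have "z \<bullet> coroot \<beta> \<le> of_int (lev \<beta> B) + 1" using closure_lev[OF B b] z unfolding Z_def by blast
    moreover have "of_int (lev \<beta> B) < bb \<bullet> coroot \<beta>" using lev_prop[OF B b bb] by blast
    ultimately show ?thesis using zL lB' bb by (smt (verit) of_int_less_iff of_int_add of_int_1 int_le_real_less)
  qed
  let ?s = "raff \<beta> (of_int L)"
  have sA: "is_alcove \<Phi> (?s ` A)" using raff_alcove[OF rs b A] .
  have sxb: "?s x \<bullet> coroot \<beta> = 2 * of_int L - x \<bullet> coroot \<beta>" for x
    unfolding raff_def using b0 by (simp add: inner_diff_left coroot_self algebra_simps)
  have sA_range: "\<forall>y\<in>?s ` A. of_int L - 1 < y \<bullet> coroot \<beta> \<and> y \<bullet> coroot \<beta> < of_int L"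
    using lev_prop[OF A b] levA sxb by fastforce
  have B_range: "\<forall>y\<in>B. of_int L - 1 < y \<bullet> coroot \<beta> \<and> y \<bullet> coroot \<beta> < of_int L"
    using lev_prop[OF B b] levB by fastforce
  have "?s ` A = B"
  proof (rule alcove_eq[OF sA B])
    fix \<delta> assume d: "\<delta> \<in> \<Phi>"
    consider "\<delta> = \<beta>" | "\<delta> = - \<beta>" | "\<delta> \<noteq> \<beta> \<and> \<delta> \<noteq> - \<beta>" by blast
    then show "lev \<delta> (?s ` A) = lev \<delta> B"
    proof cases
      case 1
      have "lev \<beta> (?s ` A) = L - 1"
        by (rule lev_unique) (use alcove_nonempty[OF A] sA_range in auto)
      then show ?thesis using 1 levB by simp
    next
      case 2
      have "lev (- \<beta>) (?s ` A) = - L"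
        by (rule lev_unique) (use alcove_nonempty[OF A] sA_range in \<open>auto simp: coroot_neg\<close>)
      moreover have "lev (- \<beta>) B = - L"
        by (rule lev_unique) (use alcove_nonempty[OF B] B_range in \<open>auto simp: coroot_neg\<close>)
      ultimately show ?thesis using 2 by simp
    next
      case 3
      have e1: "lev \<delta> A = lev \<delta> B"
        by (rule lev_wall[OF rs A B nb ad d]) (use 3 in auto)
      define Z' where "Z' = closure A \<inter> closure (?s ` A) \<inter> hyp (- \<beta>) k"
      have "Z \<subseteq> Z'"
      proof
        fix w assume w: "w \<in> Z"
        have wL: "w \<bullet> coroot \<beta> = of_int L" using w unfolding Z_def hyp_def L_def by (auto simp: coroot_neg)
        have sw: "?s w = w" unfolding raff_def using wL by simp
        have "w \<in> closure A" using w unfolding Z_def by blast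
        then have "?s w \<in> closure (?s ` A)" using raff_closure[OF b0] by blast
        then show "w \<in> Z'" using w sw unfolding Z_def Z'_def by auto
      qed
      then have "aff_dim Z \<le> aff_dim Z'" by (rule aff_dim_subset)
      moreover have "aff_dim Z' \<le> aff_dim (hyp (- \<beta>) k)" unfolding Z'_def by (rule aff_dim_subset) blast
      moreover have "aff_dim (hyp (- \<beta>) k) = int (DIM('a) - 1)" using aff_dim_hyp b0 by (metis neg_equal_0_iff_equal)
      ultimately have "aff_dim Z' = int DIM('a) - 1" using ad DIM_positive[where 'a='a] unfolding Z_def by linarith
      then have e2: "lev \<delta> A = lev \<delta> (?s ` A)"
        unfolding Z'_def by (rule lev_wall[OF rs A sA nb _ d]) (use 3 in auto)
      show ?thesis using e1 e2 by simp
    qed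
  qed
  then show ?thesis using b levA levB by simp
qed

lemma path_shorten:
  assumes path: "alcove_path \<Phi> As X Y" and len: "length As = N + 1"
    and FF: "\<And>A. F (F A) = A" and Falc: "\<And>A. is_alcove \<Phi> A \<Longrightarrow> is_alcove \<Phi> (F A)"
    and Fadj: "\<And>A B. adjacent \<Phi> A B \<Longrightarrow> adjacent \<Phi> (F A) (F B)"
    and jk: "j < k" "k < N" and sj: "As ! (j+1) = F (As ! j)" and sk: "As ! (k+1) = F (As ! k)"
  shows "\<exists>Bs. alcove_path \<Phi> Bs X Y \<and> length Bs = N - 1"
proof -
  have alc: "\<And>i. i \<le> N \<Longrightarrow> is_alcove \<Phi> (As ! i)"
    using path len unfolding alcove_path_def by (metis Suc_eq_plus1 le_imp_less_Suc nth_mem)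
  have adj: "\<And>i. i < N \<Longrightarrow> adjacent \<Phi> (As ! i) (As ! Suc i)"
    using path len unfolding alcove_path_def by auto
  have hdA: "As ! 0 = X" using path unfolding alcove_path_def by (metis hd_conv_nth)
  have lastA: "As ! N = Y"
  proof -
    have "As \<noteq> []" "last As = Y" using path unfolding alcove_path_def by auto
    then show ?thesis using last_conv_nth[of As] len by simp
  qed
  define C where "C i = (if i \<le> j then As ! i else if i < k then F (As ! (i+1)) else As ! (i+2))" for i
  have sj': "As ! j = F (As ! (j+1))" using sj FF by simp
  have C1: "C i = F (As ! (i+1))" if "j \<le> i" "i < k" for i
    using that sj' unfolding C_def by auto
  have C2: "C i = As ! (i+2)" if "j \<le> i" "k \<le> i + 1" for i
  proof (cases "i \<le> j")
    case True
    then have "i = j" "k = j + 1" using that jk by auto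
    then show ?thesis unfolding C_def using sj' sk FF by (simp add: numeral_2_eq_2)
  next
    case False
    show ?thesis
    proof (cases "i < k")
      case True
      then have "i + 1 = k" using that by simp
      then show ?thesis unfolding C_def using False True sk by (simp add: numeral_2_eq_2)
    next
      case False2: False
      then show ?thesis unfolding C_def using False by simp
    qed
  qed
  have C0: "C i = As ! i" if "i \<le> j" for i using that unfolding C_def by simp
  define Bs where "Bs = map C [0..<N-1]"
  have N2: "2 \<le> N" using jk by simp
  have lenB: "length Bs = N - 1" unfolding Bs_def by simp
  have BsC: "\<And>i. i < N - 1 \<Longrightarrow> Bs ! i = C i" unfolding Bs_def by simp
  have "alcove_path \<Phi> Bs X Y"
    unfolding alcove_path_def
  proof (intro conjI allI impI ballI)
    show "Bs \<noteq> []" using N2 lenB by auto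
    show "hd Bs = X" using N2 BsC[of 0] C0[of 0] hdA lenB
      by (metis \<open>Bs \<noteq> []\<close> hd_conv_nth le0 length_greater_0_conv)
    have e: "N - 2 + 2 = N" using N2 by simp
    have "C (N - 2) = As ! (N - 2 + 2)" by (rule C2) (use jk N2 in auto)
    then have "C (N - 2) = As ! N" by (simp only: e)
    moreover have "last Bs = Bs ! (N - 2)" using last_conv_nth[OF \<open>Bs \<noteq> []\<close>] lenB
      by (simp add: numeral_2_eq_2)
    moreover have "Bs ! (N - 2) = C (N - 2)" using BsC[of "N-2"] N2 by simp
    ultimately show "last Bs = Y" using lastA by simp
    fix A assume "A \<in> set Bs"
    then obtain i where i: "i < N - 1" "A = C i" unfolding Bs_def by auto
    show "is_alcove \<Phi> A"
    proof -
      consider "i \<le> j" | "j \<le> i" "i < k" | "j \<le> i" "k \<le> i + 1" by linarith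
      then show ?thesis
      proof cases
        case 1 then show ?thesis using i C0 alc jk by simp
      next
        case 2 then show ?thesis using i C1 alc Falc jk by simp
      next
        case 3 then show ?thesis using i C2 alc by simp
      qed
    qed
  next
    fix i assume si: "Suc i < length Bs"
    then have iN: "i + 2 < N" using lenB by simp
    consider "i + 1 \<le> j" | "j \<le> i" "i + 1 < k" | "j \<le> i" "k \<le> i + 1" by linarith
    then show "adjacent \<Phi> (Bs ! i) (Bs ! Suc i)"
    proof cases
      case 1 then show ?thesis using BsC[of i] BsC[of "Suc i"] iN C0[of i] C0[of "Suc i"] adj[of i] by simp
    next
      case 2
      then have "Bs ! i = F (As ! (i+1))" "Bs ! Suc i = F (As ! Suc (i+1))"
        using BsC[of i] BsC[of "Suc i"] iN C1[of i] C1[of "Suc i"] by auto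
      then show ?thesis using Fadj adj[of "i+1"] iN by simp
    next
      case 3
      then have "Bs ! i = As ! (i+2)" "Bs ! Suc i = As ! Suc (i+2)"
        using BsC[of i] BsC[of "Suc i"] iN C2[of i] C2[of "Suc i"] by auto
      then show ?thesis using adj[of "i+2"] iN by simp
    qed
  qed
  then show ?thesis using lenB by blast
qed

lemma step_other:
  assumes rs: "root_system \<Phi>" and arr: "alcove_arrow \<Phi> A (- \<gamma>) B" and b: "\<beta> \<in> \<Phi>"
    and ne: "\<gamma> \<noteq> \<beta>" "\<gamma> \<noteq> - \<beta>"
  shows "lev \<beta> B = lev \<beta> A"
proof -
  obtain k where sw: "share_wall \<Phi> A B (- \<gamma>) k" using arr unfolding alcove_arrow_def by blast
  then have A: "is_alcove \<Phi> A" and B: "is_alcove \<Phi> B" and ng: "- \<gamma> \<in> \<Phi>"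
    and ad: "aff_dim (closure A \<inter> closure B \<inter> hyp (- \<gamma>) k) = int DIM('a) - 1"
    unfolding share_wall_def by auto
  show ?thesis using lev_wall[OF rs A B ng ad b] ne by (metis minus_minus)
qed

lemma step_neg:
  assumes rs: "root_system \<Phi>" and arr: "alcove_arrow \<Phi> A (- (- \<beta>)) B"
  shows "\<beta> \<in> \<Phi> \<and> lev \<beta> B = lev \<beta> A + 1 \<and> B = raff \<beta> (of_int (lev \<beta> A + 1)) ` A"
proof -
  have h: "- \<beta> \<in> \<Phi> \<and> lev (- \<beta>) B = lev (- \<beta>) A - 1 \<and> B = raff (- \<beta>) (of_int (lev (- \<beta>) A)) ` A"
    by (rule arrow_lemma[OF rs arr])
  obtain k where sw: "share_wall \<Phi> A B (- (- \<beta>)) k" using arr unfolding alcove_arrow_def by blast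
  then have A: "is_alcove \<Phi> A" and B: "is_alcove \<Phi> B" and b: "\<beta> \<in> \<Phi>"
    unfolding share_wall_def by auto
  have h2: "lev (- \<beta>) B = lev (- \<beta>) A - 1" using h by blast
  have "lev \<beta> B = lev \<beta> A + 1" using h2 lev_neg[OF A b] lev_neg[OF B b] by linarith
  moreover have "B = raff \<beta> (of_int (lev \<beta> A + 1)) ` A" using h lev_neg[OF A b] by (simp add: raff_neg add.commute)
  ultimately show ?thesis using b by simp
qed

lemma card_Suc_filter:
  "card {j. j < Suc p \<and> P j} = card {j. j < p \<and> P j} + (if P p then 1 else 0)"
proof (cases "P p")
  case True
  then have "{j. j < Suc p \<and> P j} = insert p {j. j < p \<and> P j}" by (auto simp: less_Suc_eq)
  then show ?thesis using True by simp
next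
  case False
  then have "{j. j < Suc p \<and> P j} = {j. j < p \<and> P j}" by (auto simp: less_Suc_eq)
  then show ?thesis using False by simp
qed

theorem lemma3p4:
  fixes \<Phi> \<Delta> :: "'a::euclidean_space set" and lam :: 'a and \<beta>s :: "'a list"
    and t q n i :: nat and a b :: nat
  assumes rs: "root_system \<Phi>" and spanV: "span \<Phi> = UNIV" and irr: "irreducible_rs \<Phi>"
    and base: "is_base \<Phi> \<Delta>"
    and dom: "dominant \<Phi> \<Delta> lam"
    and chain: "lambda_chain \<Phi> \<Delta> lam \<beta>s"
    and len: "length \<beta>s = n + q" and tn: "t \<le> n"
    and sub: "\<exists>\<Phi>'. \<Phi>' \<subseteq> \<Phi> \<and> root_system \<Phi>' \<and> rank \<Phi>' = 2 \<and>
               (\<lambda>j. \<beta>s ! (t + j)) ` {0..<q} = \<Phi>' \<inter> pos_roots \<Phi> \<Delta>"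
    and dist: "distinct (map (\<lambda>j. \<beta>s ! (t + j)) [0..<q])"
    and i: "1 \<le> i" "i \<le> q"
    and comb: "coroot (\<beta>s ! (t + i - 1)) =
               of_nat a *\<^sub>R coroot (\<beta>s ! t) + of_nat b *\<^sub>R coroot (\<beta>s ! (t + q - 1))"
  shows "card {j. j < t + i - 1 \<and> \<beta>s ! j = \<beta>s ! (t + i - 1)} =
         a * card {j. j < t \<and> \<beta>s ! j = \<beta>s ! t}
         + b * card {j. j < t + q - 1 \<and> \<beta>s ! j = \<beta>s ! (t + q - 1)}"
proof -
  obtain As where lenA: "length As = Suc (length \<beta>s)"
    and path: "alcove_path \<Phi> As (fund_alcove \<Phi> \<Delta>) (shifted_alcove \<Phi> \<Delta> lam)"
    and arr: "\<forall>j < length \<beta>s. alcove_arrow \<Phi> (As ! j) (- (\<beta>s ! j)) (As ! Suc j)"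
    and minl: "\<forall>Bs. alcove_path \<Phi> Bs (fund_alcove \<Phi> \<Delta>) (shifted_alcove \<Phi> \<Delta> lam) \<longrightarrow> length As \<le> length Bs"
    using chain unfolding lambda_chain_def by blast
  define N where "N = length \<beta>s"
  have alc: "\<And>p. p \<le> N \<Longrightarrow> is_alcove \<Phi> (As ! p)"
    using path lenA unfolding alcove_path_def N_def by (metis le_imp_less_Suc nth_mem)
  have A0: "As ! 0 = fund_alcove \<Phi> \<Delta>" using path unfolding alcove_path_def by (metis hd_conv_nth)
  have ar: "\<And>p. p < N \<Longrightarrow> alcove_arrow \<Phi> (As ! p) (- (\<beta>s ! p)) (As ! Suc p)"
    using arr unfolding N_def by blast
  obtain x0 where x0: "x0 \<in> fund_alcove \<Phi> \<Delta>" using alcove_nonempty[OF alc[of 0]] A0 by auto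
  have posfund: "\<And>\<beta>. \<beta> \<in> pos_roots \<Phi> \<Delta> \<Longrightarrow> 0 < x0 \<bullet> coroot \<beta> \<and> x0 \<bullet> coroot \<beta> < 1"
    using x0 unfolding fund_alcove_def by blast
  have notboth: "\<And>\<beta>. \<beta> \<in> pos_roots \<Phi> \<Delta> \<Longrightarrow> - \<beta> \<in> pos_roots \<Phi> \<Delta> \<Longrightarrow> False"
  proof -
    fix \<beta> assume "\<beta> \<in> pos_roots \<Phi> \<Delta>" "- \<beta> \<in> pos_roots \<Phi> \<Delta>"
    then have "0 < x0 \<bullet> coroot \<beta>" "0 < x0 \<bullet> coroot (- \<beta>)" using posfund by blast+
    then show False by (simp add: coroot_neg)
  qed
  have posPhi: "\<And>\<beta>. \<beta> \<in> pos_roots \<Phi> \<Delta> \<Longrightarrow> \<beta> \<in> \<Phi>" unfolding pos_roots_def by blast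
  have lev0: "\<And>\<beta>. \<beta> \<in> pos_roots \<Phi> \<Delta> \<Longrightarrow> lev \<beta> (As ! 0) = 0"
  proof -
    fix \<beta> assume b: "\<beta> \<in> pos_roots \<Phi> \<Delta>"
    show "lev \<beta> (As ! 0) = 0"
      by (rule lev_unique) (use alcove_nonempty[OF alc[of 0]] b A0 in \<open>auto simp: fund_alcove_def\<close>)
  qed
  have intv: "\<And>\<beta> a r. \<beta> \<in> \<Phi> \<Longrightarrow> a + r \<le> N \<Longrightarrow> (\<forall>m<r. \<beta>s ! (a+m) \<noteq> \<beta> \<and> \<beta>s ! (a+m) \<noteq> - \<beta>)
      \<Longrightarrow> lev \<beta> (As ! (a + r)) = lev \<beta> (As ! a)"
  proof -
    fix \<beta> a r assume b: "\<beta> \<in> \<Phi>"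
    show "a + r \<le> N \<Longrightarrow> (\<forall>m<r. \<beta>s ! (a+m) \<noteq> \<beta> \<and> \<beta>s ! (a+m) \<noteq> - \<beta>)
      \<Longrightarrow> lev \<beta> (As ! (a + r)) = lev \<beta> (As ! a)"
    proof (induction r)
      case 0 then show ?case by simp
    next
      case (Suc r)
      have "lev \<beta> (As ! Suc (a + r)) = lev \<beta> (As ! (a + r))"
        by (rule step_other[OF rs ar b]) (use Suc.prems in auto)
      then show ?case using Suc by simp
    qed
  qed
  have noupdown: "\<And>\<beta> j p. \<beta> \<in> \<Phi> \<Longrightarrow> j < p \<Longrightarrow> p < N \<Longrightarrow> \<beta>s ! j = - \<beta> \<Longrightarrow> \<beta>s ! p = \<beta> \<Longrightarrow> False"
  proof -
    fix \<beta> j p assume b: "\<beta> \<in> \<Phi>" and jp: "j < p" "p < N" and bj: "\<beta>s ! j = - \<beta>" and bp: "\<beta>s ! p = \<beta>"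
    define Pd where "Pd d \<longleftrightarrow> (\<exists>j. j + d < N \<and> 0 < d \<and> \<beta>s ! j = - \<beta> \<and> \<beta>s ! (j + d) = \<beta>)" for d
    have "Pd (p - j)" unfolding Pd_def using jp bj bp by (intro exI[of _ j]) auto
    define d where "d = (LEAST d. Pd d)"
    have Pdd: "Pd d" unfolding d_def by (rule LeastI) (fact \<open>Pd (p - j)\<close>)
    have mind: "\<And>d'. Pd d' \<Longrightarrow> d \<le> d'" unfolding d_def by (rule Least_le)
    obtain j0 where j0: "j0 + d < N" "0 < d" "\<beta>s ! j0 = - \<beta>" "\<beta>s ! (j0 + d) = \<beta>"
      using Pdd unfolding Pd_def by blast
    have mid: "\<beta>s ! (j0 + m) \<noteq> \<beta> \<and> \<beta>s ! (j0 + m) \<noteq> - \<beta>" if m: "0 < m" "m < d" for m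
    proof
      show "\<beta>s ! (j0 + m) \<noteq> \<beta>"
      proof
        assume "\<beta>s ! (j0 + m) = \<beta>"
        then have "Pd m" unfolding Pd_def using j0 m by (intro exI[of _ j0]) auto
        then show False using mind m by fastforce
      qed
      show "\<beta>s ! (j0 + m) \<noteq> - \<beta>"
      proof
        assume "\<beta>s ! (j0 + m) = - \<beta>"
        then have "Pd (d - m)" unfolding Pd_def using j0 m by (intro exI[of _ "j0 + m"]) auto
        then show False using mind m by fastforce
      qed
    qed
    have sn: "\<beta> \<in> \<Phi> \<and> lev \<beta> (As ! Suc j0) = lev \<beta> (As ! j0) + 1
        \<and> As ! Suc j0 = raff \<beta> (of_int (lev \<beta> (As ! j0) + 1)) ` (As ! j0)"
      by (rule step_neg[OF rs]) (use ar[of j0] j0 bj in auto)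
    have ss: "\<beta> \<in> \<Phi> \<and> lev \<beta> (As ! Suc (j0 + d)) = lev \<beta> (As ! (j0 + d)) - 1
        \<and> As ! Suc (j0 + d) = raff \<beta> (of_int (lev \<beta> (As ! (j0 + d)))) ` (As ! (j0 + d))"
      by (rule arrow_lemma[OF rs]) (use ar[of "j0 + d"] j0 in auto)
    have "lev \<beta> (As ! (Suc j0 + (d - 1))) = lev \<beta> (As ! Suc j0)"
    proof (rule intv[OF b])
      show "Suc j0 + (d - 1) \<le> N" using j0 by simp
      show "\<forall>m<d - 1. \<beta>s ! (Suc j0 + m) \<noteq> \<beta> \<and> \<beta>s ! (Suc j0 + m) \<noteq> - \<beta>"
      proof (intro allI impI)
        fix m assume "m < d - 1"
        then have "\<beta>s ! (j0 + Suc m) \<noteq> \<beta> \<and> \<beta>s ! (j0 + Suc m) \<noteq> - \<beta>" using mid[of "Suc m"] by simp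
        then show "\<beta>s ! (Suc j0 + m) \<noteq> \<beta> \<and> \<beta>s ! (Suc j0 + m) \<noteq> - \<beta>" by simp
      qed
    qed
    moreover have "Suc j0 + (d - 1) = j0 + d" using j0 by simp
    moreover have "lev \<beta> (As ! Suc j0) = lev \<beta> (As ! j0) + 1" using sn by blast
    ultimately have ld: "lev \<beta> (As ! (j0 + d)) = lev \<beta> (As ! j0) + 1" by simp
    define M where "M = lev \<beta> (As ! j0) + 1"
    have b0: "\<beta> \<noteq> 0" using rs_facts(1)[OF rs] b by auto
    have "\<exists>Bs. alcove_path \<Phi> Bs (fund_alcove \<Phi> \<Delta>) (shifted_alcove \<Phi> \<Delta> lam) \<and> length Bs = N - 1"
    proof (rule path_shorten[OF path, where F = "image (raff \<beta> (of_int M))" and j = j0 and k = "j0 + d"])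
      show "length As = N + 1" using lenA N_def by simp
      show "\<And>A. raff \<beta> (of_int M) ` raff \<beta> (of_int M) ` A = A" using b0 by (simp add: image_image raff_invol)
      show "\<And>A. is_alcove \<Phi> A \<Longrightarrow> is_alcove \<Phi> (raff \<beta> (of_int M) ` A)" by (rule raff_alcove[OF rs b])
      show "\<And>A B. adjacent \<Phi> A B \<Longrightarrow> adjacent \<Phi> (raff \<beta> (of_int M) ` A) (raff \<beta> (of_int M) ` B)"
        by (rule raff_adjacent[OF rs b])
      show "j0 < j0 + d" "j0 + d < N" using j0 by auto
      show "As ! (j0 + 1) = raff \<beta> (of_int M) ` As ! j0" using sn M_def by simp
      show "As ! (j0 + d + 1) = raff \<beta> (of_int M) ` As ! (j0 + d)" using ss ld M_def by simp
    qed
    then show False using minl lenA N_def by fastforce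
  qed
  have count: "\<And>\<beta> p. \<beta> \<in> pos_roots \<Phi> \<Delta> \<Longrightarrow> p \<le> N \<Longrightarrow>
      lev \<beta> (As ! p) = int (card {j. j < p \<and> \<beta>s ! j = - \<beta>}) - int (card {j. j < p \<and> \<beta>s ! j = \<beta>})"
  proof -
    fix \<beta> p assume bpos: "\<beta> \<in> pos_roots \<Phi> \<Delta>"
    have b: "\<beta> \<in> \<Phi>" using posPhi[OF bpos] .
    have bn: "\<beta> \<noteq> - \<beta>"
    proof
      assume "\<beta> = - \<beta>"
      then have "\<beta> + \<beta> = 0" by (metis add.right_inverse)
      then have "(2::real) *\<^sub>R \<beta> = 0" by (simp add: scaleR_2)
      then have "\<beta> = 0" by simp
      then show False using rs_facts(1)[OF rs] b by auto
    qed
    show "p \<le> N \<Longrightarrow> lev \<beta> (As ! p) = int (card {j. j < p \<and> \<beta>s ! j = - \<beta>}) - int (card {j. j < p \<and> \<beta>s ! j = \<beta>})"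
    proof (induction p)
      case 0 then show ?case using lev0[OF bpos] by simp
    next
      case (Suc p)
      then have pN: "p < N" by simp
      consider "\<beta>s ! p = \<beta>" | "\<beta>s ! p = - \<beta>" | "\<beta>s ! p \<noteq> \<beta> \<and> \<beta>s ! p \<noteq> - \<beta>" by blast
      then show ?case
      proof cases
        case 1
        have "lev \<beta> (As ! Suc p) = lev \<beta> (As ! p) - 1"
          using arrow_lemma[OF rs] ar[OF pN] 1 by blast
        then show ?thesis using Suc 1 bn by (simp add: card_Suc_filter)
      next
        case 2
        have "lev \<beta> (As ! Suc p) = lev \<beta> (As ! p) + 1"
        proof -
          have "alcove_arrow \<Phi> (As ! p) (- (- \<beta>)) (As ! Suc p)" using ar[OF pN] 2 by simp
          then show ?thesis using step_neg[OF rs] by blast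
        qed
        then show ?thesis using Suc 2 bn by (simp add: card_Suc_filter)
      next
        case 3
        have "lev \<beta> (As ! Suc p) = lev \<beta> (As ! p)"
          using step_other[OF rs ar[OF pN] b] 3 by blast
        then show ?thesis using Suc 3 by (simp add: card_Suc_filter)
      qed
    qed
  qed
  obtain \<Phi>' where sub': "(\<lambda>j. \<beta>s ! (t + j)) ` {0..<q} = \<Phi>' \<inter> pos_roots \<Phi> \<Delta>" using sub by blast
  have posq: "\<And>m. m < q \<Longrightarrow> \<beta>s ! (t + m) \<in> pos_roots \<Phi> \<Delta>"
    using sub' by (metis (no_types, lifting) IntD2 atLeastLessThan_iff image_eqI zero_le)
  have distq: "\<And>m r. m < q \<Longrightarrow> r < q \<Longrightarrow> \<beta>s ! (t + m) = \<beta>s ! (t + r) \<Longrightarrow> m = r"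
    using dist by (auto simp: distinct_conv_nth)
  have tq: "t + q \<le> N" using len tn N_def by simp
  have key: "\<And>r. r < q \<Longrightarrow> lev (\<beta>s ! (t + r)) (As ! t) = - int (card {j. j < t + r \<and> \<beta>s ! j = \<beta>s ! (t + r)})
        \<and> lev (\<beta>s ! (t + r)) (As ! (t + q)) = lev (\<beta>s ! (t + r)) (As ! t) - 1"
  proof -
    fix r assume r: "r < q"
    define \<beta> where "\<beta> = \<beta>s ! (t + r)"
    have bpos: "\<beta> \<in> pos_roots \<Phi> \<Delta>" unfolding \<beta>_def using posq[OF r] .
    have b: "\<beta> \<in> \<Phi>" using posPhi[OF bpos] .
    have other: "\<And>m. m < q \<Longrightarrow> m \<noteq> r \<Longrightarrow> \<beta>s ! (t + m) \<noteq> \<beta> \<and> \<beta>s ! (t + m) \<noteq> - \<beta>"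
    proof
      fix m assume m: "m < q" "m \<noteq> r"
      show "\<beta>s ! (t + m) \<noteq> \<beta>" unfolding \<beta>_def using distq[OF m(1) r] m by blast
      show "\<beta>s ! (t + m) \<noteq> - \<beta>"
      proof
        assume "\<beta>s ! (t + m) = - \<beta>"
        then have "- \<beta> \<in> pos_roots \<Phi> \<Delta>" using posq[OF m(1)] by simp
        then show False using notboth[OF bpos] by blast
      qed
    qed
    have e1: "lev \<beta> (As ! (t + r)) = lev \<beta> (As ! t)"
      by (rule intv[OF b]) (use tq r other in auto)
    have "{j. j < t + r \<and> \<beta>s ! j = - \<beta>} = {}"
      using noupdown[OF b] tq r unfolding \<beta>_def by fastforce
    then have e2: "lev \<beta> (As ! (t + r)) = - int (card {j. j < t + r \<and> \<beta>s ! j = \<beta>})"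
      using count[OF bpos, of "t + r"] tq r by simp
    have e3: "lev \<beta> (As ! Suc (t + r)) = lev \<beta> (As ! (t + r)) - 1"
      using arrow_lemma[OF rs] ar[of "t + r"] tq r unfolding \<beta>_def by fastforce
    have e4: "lev \<beta> (As ! (Suc (t + r) + (q - r - 1))) = lev \<beta> (As ! Suc (t + r))"
    proof (rule intv[OF b])
      show "Suc (t + r) + (q - r - 1) \<le> N" using tq r by simp
      show "\<forall>m<q - r - 1. \<beta>s ! (Suc (t + r) + m) \<noteq> \<beta> \<and> \<beta>s ! (Suc (t + r) + m) \<noteq> - \<beta>"
      proof (intro allI impI)
        fix m assume m: "m < q - r - 1"
        have "Suc (t + r) + m = t + (Suc r + m)" by simp
        moreover have "\<beta>s ! (t + (Suc r + m)) \<noteq> \<beta> \<and> \<beta>s ! (t + (Suc r + m)) \<noteq> - \<beta>"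
          by (rule other) (use m in auto)
        ultimately show "\<beta>s ! (Suc (t + r) + m) \<noteq> \<beta> \<and> \<beta>s ! (Suc (t + r) + m) \<noteq> - \<beta>" by metis
      qed
    qed
    have "Suc (t + r) + (q - r - 1) = t + q" using r by simp
    then show "lev (\<beta>s ! (t + r)) (As ! t) = - int (card {j. j < t + r \<and> \<beta>s ! j = \<beta>s ! (t + r)})
        \<and> lev (\<beta>s ! (t + r)) (As ! (t + q)) = lev (\<beta>s ! (t + r)) (As ! t) - 1"
      using e1 e2 e3 e4 unfolding \<beta>_def by simp
  qed
  have q1: "0 < q" using i by simp
  have ii: "t + i - 1 = t + (i - 1)" "i - 1 < q" using i by auto
  have qq: "t + q - 1 = t + (q - 1)" "q - 1 < q" using q1 by auto
  define \<beta>1 where "\<beta>1 = \<beta>s ! t"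
  define \<beta>i where "\<beta>i = \<beta>s ! (t + (i - 1))"
  define \<beta>q where "\<beta>q = \<beta>s ! (t + (q - 1))"
  define l1 where "l1 = card {j. j < t \<and> \<beta>s ! j = \<beta>1}"
  define li where "li = card {j. j < t + (i - 1) \<and> \<beta>s ! j = \<beta>i}"
  define lq where "lq = card {j. j < t + (q - 1) \<and> \<beta>s ! j = \<beta>q}"
  have k1: "lev \<beta>1 (As ! t) = - int l1 \<and> lev \<beta>1 (As ! (t + q)) = lev \<beta>1 (As ! t) - 1"
    using key[OF q1] unfolding \<beta>1_def l1_def by simp
  have ki: "lev \<beta>i (As ! t) = - int li \<and> lev \<beta>i (As ! (t + q)) = lev \<beta>i (As ! t) - 1"
    using key[OF ii(2)] unfolding \<beta>i_def li_def by simp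
  have kq: "lev \<beta>q (As ! t) = - int lq \<and> lev \<beta>q (As ! (t + q)) = lev \<beta>q (As ! t) - 1"
    using key[OF qq(2)] unfolding \<beta>q_def lq_def by simp
  have b1: "\<beta>1 \<in> \<Phi>" unfolding \<beta>1_def using posPhi posq[OF q1] by simp
  have bi: "\<beta>i \<in> \<Phi>" unfolding \<beta>i_def using posPhi posq[OF ii(2)] by simp
  have bq: "\<beta>q \<in> \<Phi>" unfolding \<beta>q_def using posPhi posq[OF qq(2)] by simp
  obtain x where x: "x \<in> As ! t" using alcove_nonempty[OF alc[of t]] tq by auto
  obtain y where y: "y \<in> As ! (t + q)" using alcove_nonempty[OF alc[of "t + q"]] tq by auto
  have At: "is_alcove \<Phi> (As ! t)" and Atq: "is_alcove \<Phi> (As ! (t + q))" using alc tq by auto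
  have comb': "coroot \<beta>i = of_nat a *\<^sub>R coroot \<beta>1 + of_nat b *\<^sub>R coroot \<beta>q"
    using comb ii qq unfolding \<beta>i_def \<beta>1_def \<beta>q_def by simp
  define c1 where "c1 = - int l1"
  define ci where "ci = - int li"
  define cq where "cq = - int lq"
  have x1: "of_int c1 < x \<bullet> coroot \<beta>1" using lev_prop[OF At b1 x] k1 c1_def by simp
  have xq: "of_int cq < x \<bullet> coroot \<beta>q" using lev_prop[OF At bq x] kq cq_def by simp
  have xi: "x \<bullet> coroot \<beta>i < of_int ci + 1" using lev_prop[OF At bi x] ki ci_def by simp
  have y1: "y \<bullet> coroot \<beta>1 < of_int c1" using lev_prop[OF Atq b1 y] k1 c1_def by simp
  have yq: "y \<bullet> coroot \<beta>q < of_int cq" using lev_prop[OF Atq bq y] kq cq_def by simp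
  have yi: "of_int ci - 1 < y \<bullet> coroot \<beta>i" using lev_prop[OF Atq bi y] ki ci_def by simp
  have xe: "x \<bullet> coroot \<beta>i = real a * (x \<bullet> coroot \<beta>1) + real b * (x \<bullet> coroot \<beta>q)"
    using comb' by (simp add: inner_add_right)
  have ye: "y \<bullet> coroot \<beta>i = real a * (y \<bullet> coroot \<beta>1) + real b * (y \<bullet> coroot \<beta>q)"
    using comb' by (simp add: inner_add_right)
  have "real a * of_int c1 \<le> real a * (x \<bullet> coroot \<beta>1)" using x1 by (intro mult_left_mono) auto
  moreover have "real b * of_int cq \<le> real b * (x \<bullet> coroot \<beta>q)" using xq by (intro mult_left_mono) auto
  ultimately have "real a * of_int c1 + real b * of_int cq < of_int ci + 1" using xe xi by linarith
  then have "real_of_int (int a * c1 + int b * cq) < real_of_int (ci + 1)" by simp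
  then have le1: "int a * c1 + int b * cq \<le> ci" unfolding of_int_less_iff by linarith
  have "real a * (y \<bullet> coroot \<beta>1) \<le> real a * of_int c1" using y1 by (intro mult_left_mono) auto
  moreover have "real b * (y \<bullet> coroot \<beta>q) \<le> real b * of_int cq" using yq by (intro mult_left_mono) auto
  ultimately have "of_int ci - 1 < real a * of_int c1 + real b * of_int cq" using ye yi by linarith
  then have "real_of_int (ci - 1) < real_of_int (int a * c1 + int b * cq)" by simp
  then have le2: "ci \<le> int a * c1 + int b * cq" unfolding of_int_less_iff by linarith
  have "ci = int a * c1 + int b * cq" using le1 le2 by simp
  then have "int li = int (a * l1 + b * lq)" unfolding c1_def ci_def cq_def by simp
  then have "li = a * l1 + b * lq" by (simp only: of_nat_eq_iff)
  then show ?thesis using ii qq unfolding li_def l1_def lq_def \<beta>i_def \<beta>1_def \<beta>q_def by simp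
qed

end
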